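(* Let $\kappa$ be an uncountable regular cardinal and let $\mathcal{I}$ be a $\kappa$-complete proper ideal on $\kappa$ containing every bounded subset of $\kappa$, and suppose $\mathcal{I}$ contains an unbounded subset of $\kappa$. Let $\nu\in\{2,\kappa\}$. Then the class of $\mathcal{I}$-analytic subsets of ${}^{\kappa}\nu$ is closed under unions of at most $2^\kappa$ sets.
   Context: Work in ZFC. For $\mu\in\{2,\kappa\}$, ${}^{\kappa}\mu$ is the set of functions $\kappa\to\mu$. For $f\colon D\to\mu$ with $D\in\mathcal{I}$ let $\mathbf{N}_f=\{x\in{}^{\kappa}\mu: f\subseteq x\}$; the $\mathcal{I}$-topology $\tau_{\mathcal{I}}$ on ${}^{\kappa}\mu$ is generated by these sets. A function ${}^{\kappa}\kappa\to{}^{\kappa}\nu$ is $\mathcal{I}$-continuous if it is continuous when both spaces carry $\tau_{\mathcal{I}}$. A set $A\subseteq{}^{\kappa}\nu$ is $\mathcal{I}$-analytic if either $A=\emptyset$ or there are a $\tau_{\mathcal{I}}$-closed set $C\subseteq{}^{\kappa}\kappa$ and an $\mathcal{I}$-continuous function $\Phi\colon{}^{\kappa}\kappa\to{}^{\kappa}\nu$ with $\Phi(C)=A$. *)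

theory Defs
  imports "HOL-Analysis.Analysis"
begin

text \<open>The cardinal kappa is represented by a cardinal well-order r on a type 'k
  (Field r = UNIV); ordinals below kappa are the elements of 'k.\<close>

definition uncountable_regular_cardinal :: "'k rel \<Rightarrow> bool" where
  "uncountable_regular_cardinal r \<longleftrightarrow>
     Card_order r \<and> Field r = UNIV \<and> \<not> countable (UNIV :: 'k set) \<and> regularCard r"

definition bounded_in :: "'k rel \<Rightarrow> 'k set \<Rightarrow> bool" where
  "bounded_in r A \<longleftrightarrow> (\<exists>\<beta>. \<forall>\<alpha>\<in>A. (\<alpha>, \<beta>) \<in> r)"

definition good_ideal :: "'k rel \<Rightarrow> 'k set set \<Rightarrow> bool" where
  "good_ideal r I \<longleftrightarrow>
     (\<forall>A B. A \<in> I \<longrightarrow> B \<subseteq> A \<longrightarrow> B \<in> I) \<and>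
     (\<forall>F. F \<subseteq> I \<longrightarrow> (card_of F, r) \<in> ordLess \<longrightarrow> \<Union>F \<in> I) \<and>
     UNIV \<notin> I \<and>
     (\<forall>A. bounded_in r A \<longrightarrow> A \<in> I)"

text \<open>The value set nu: either kappa itself (all of 'k), or the ordinal 2 = {0,1},
  i.e. the set of predecessors of the element of r having exactly two predecessors.\<close>
definition nu_choice :: "'k rel \<Rightarrow> 'k set \<Rightarrow> bool" where
  "nu_choice r V \<longleftrightarrow> V = UNIV \<or> (\<exists>t. V = underS r t \<and> card (underS r t) = 2)"

definition fspace :: "'k set \<Rightarrow> ('k \<Rightarrow> 'k) set" where
  "fspace V = {x. \<forall>a. x a \<in> V}"

text \<open>Basic open set N_f for f : D \<rightarrow> nu (f given by its values on D).\<close>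
definition Nbhd :: "'k set \<Rightarrow> 'k set \<Rightarrow> ('k \<Rightarrow> 'k) \<Rightarrow> ('k \<Rightarrow> 'k) set" where
  "Nbhd V D f = {x \<in> fspace V. \<forall>d\<in>D. x d = f d}"

definition I_topology :: "'k set set \<Rightarrow> 'k set \<Rightarrow> ('k \<Rightarrow> 'k) topology" where
  "I_topology I V = subtopology
      (topology_generated_by {Nbhd V D f | D f. D \<in> I \<and> f ` D \<subseteq> V}) (fspace V)"

definition I_analytic :: "'k set set \<Rightarrow> 'k set \<Rightarrow> ('k \<Rightarrow> 'k) set \<Rightarrow> bool" where
  "I_analytic I V A \<longleftrightarrow> A = {} \<or>
     (\<exists>C \<Phi>. closedin (I_topology I UNIV) C \<and>
            continuous_map (I_topology I UNIV) (I_topology I V) \<Phi> \<and> \<Phi> ` C = A)"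

end

theory Submission
  imports Defs
begin

lemma S_cover:
  assumes "{} \<in> I"
  shows "\<Union>{Nbhd UNIV D f | D f. D \<in> I \<and> f ` D \<subseteq> UNIV} = UNIV"
proof -
  let ?S = "{Nbhd UNIV D f | D f. D \<in> I \<and> f ` D \<subseteq> UNIV}"
  have 1: "Nbhd UNIV {} id \<in> ?S" using assms by (auto intro!: exI[of _ "{}"])
  have 2: "Nbhd UNIV {} id = UNIV" by (auto simp: Nbhd_def fspace_def)
  have "UNIV \<subseteq> \<Union>?S" using Union_upper[OF 1] by (simp only: 2)
  thus ?thesis by blast
qed

lemma IT_eq:
  assumes "{} \<in> I"
  shows "I_topology I UNIV = topology_generated_by {Nbhd UNIV D f | D f. D \<in> I \<and> f ` D \<subseteq> UNIV}"
proof -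
  let ?S = "{Nbhd UNIV D f | D f. D \<in> I \<and> f ` D \<subseteq> UNIV}"
  have 3: "topspace (topology_generated_by ?S) = fspace UNIV"
    unfolding topology_generated_by_topspace S_cover[OF assms] by (simp add: fspace_def)
  have "I_topology I UNIV = subtopology (topology_generated_by ?S) (fspace UNIV)"
    unfolding I_topology_def by simp
  also have "\<dots> = subtopology (topology_generated_by ?S) (topspace (topology_generated_by ?S))"
    by (simp only: 3)
  also have "\<dots> = topology_generated_by ?S" by (rule subtopology_topspace)
  finally show ?thesis .
qed

lemma IT_topspace:
  assumes "{} \<in> I"
  shows "topspace (I_topology I UNIV) = UNIV"
  unfolding IT_eq[OF assms] topology_generated_by_topspace S_cover[OF assms] ..

lemma open_restr:
  assumes "{} \<in> I" "D \<in> I" "\<And>x y. (\<forall>d\<in>D. x d = y d) \<Longrightarrow> x \<in> W \<Longrightarrow> y \<in> W"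
  shows "openin (I_topology I UNIV) W"
proof -
  let ?S = "{Nbhd UNIV D f | D f. D \<in> I \<and> f ` D \<subseteq> UNIV}"
  have "W = \<Union>{Nbhd UNIV D x | x. x \<in> W}"
  proof
    show "W \<subseteq> \<Union>{Nbhd UNIV D x | x. x \<in> W}"
    proof
      fix x assume "x \<in> W"
      moreover have "x \<in> Nbhd UNIV D x" by (simp add: Nbhd_def fspace_def)
      ultimately show "x \<in> \<Union>{Nbhd UNIV D x | x. x \<in> W}" by blast
    qed
  next
    show "\<Union>{Nbhd UNIV D x | x. x \<in> W} \<subseteq> W"
    proof
      fix y assume "y \<in> \<Union>{Nbhd UNIV D x | x. x \<in> W}"
      then obtain x where x: "x \<in> W" "y \<in> Nbhd UNIV D x" by blast
      hence "\<forall>d\<in>D. x d = y d" by (simp add: Nbhd_def)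
      thus "y \<in> W" using assms(3) x(1) by blast
    qed
  qed
  moreover have "generate_topology_on ?S (\<Union>{Nbhd UNIV D x | x. x \<in> W})"
    by (rule generate_topology_on.UN) (use assms(2) in \<open>auto intro!: generate_topology_on.Basis\<close>)
  ultimately show ?thesis
    by (simp add: IT_eq[OF assms(1)] openin_topology_generated_by_iff)
qed

lemma comp_open:
  assumes "{} \<in> I" "openin (I_topology I UNIV) W"
  shows "openin (I_topology I UNIV) {x. h \<circ> x \<in> W}"
proof -
  let ?S = "{Nbhd UNIV D f | D f. D \<in> I \<and> f ` D \<subseteq> UNIV}"
  have g: "generate_topology_on ?S W"
    using assms(2) unfolding IT_eq[OF assms(1)] openin_topology_generated_by_iff .
  have "generate_topology_on ?S {x. h \<circ> x \<in> W}"
    using g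
  proof (induction rule: generate_topology_on.induct)
    case Empty
    have "{x. h \<circ> x \<in> {}} = {}" by blast
    show ?case unfolding \<open>{x. h \<circ> x \<in> {}} = {}\<close> by (rule generate_topology_on.Empty)
  next
    case (Int a b)
    have "{x. h \<circ> x \<in> a \<inter> b} = {x. h \<circ> x \<in> a} \<inter> {x. h \<circ> x \<in> b}" by blast
    show ?case unfolding \<open>{x. h \<circ> x \<in> a \<inter> b} = _\<close> by (rule generate_topology_on.Int[OF Int.IH])
  next
    case (UN K)
    have eq: "{x. h \<circ> x \<in> \<Union>K} = \<Union>((\<lambda>k. {x. h \<circ> x \<in> k}) ` K)" by blast
    have "generate_topology_on ?S (\<Union>((\<lambda>k. {x. h \<circ> x \<in> k}) ` K))"
    proof (rule generate_topology_on.UN)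
      fix k' assume "k' \<in> (\<lambda>k. {x. h \<circ> x \<in> k}) ` K"
      then obtain k where "k \<in> K" "k' = {x. h \<circ> x \<in> k}" by blast
      thus "generate_topology_on ?S k'" using UN.IH by blast
    qed
    then show ?case unfolding eq .
  next
    case (Basis s)
    then obtain D f where s: "s = Nbhd UNIV D f" "D \<in> I" by blast
    have "openin (I_topology I UNIV) {x. h \<circ> x \<in> s}"
    proof (rule open_restr[OF assms(1) s(2)])
      fix x y :: "'a \<Rightarrow> 'a" assume xy: "\<forall>d\<in>D. x d = y d" "x \<in> {x. h \<circ> x \<in> s}"
      thus "y \<in> {x. h \<circ> x \<in> s}" unfolding s(1) Nbhd_def fspace_def by simp
    qed
    then show ?case unfolding IT_eq[OF assms(1)] openin_topology_generated_by_iff .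
  qed
  thus ?thesis unfolding IT_eq[OF assms(1)] openin_topology_generated_by_iff .
qed

theorem theorem5p2:
  fixes r :: "'k rel" and I :: "'k set set" and V :: "'k set"
    and \<A> :: "('k \<Rightarrow> 'k) set set"
  assumes "uncountable_regular_cardinal r"
    and "good_ideal r I"
    and "\<exists>A\<in>I. \<not> bounded_in r A"
    and "nu_choice r V"
    and "\<forall>A\<in>\<A>. I_analytic I V A"
    and "(card_of \<A>, card_of (Pow (UNIV :: 'k set))) \<in> ordLeq"
  shows "I_analytic I V (\<Union>\<A>)"
proof -
  define A' where "A' = \<A> - {{}}"
  let ?T = "I_topology I UNIV"
  have emp: "{} \<in> I" using assms(2) unfolding good_ideal_def bounded_in_def by blast
  have top: "topspace ?T = UNIV" by (rule IT_topspace[OF emp])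
  show ?thesis
  proof (cases "A' = {}")
    case True
    hence "\<Union>\<A> = {}" unfolding A'_def by auto
    thus ?thesis unfolding I_analytic_def by simp
  next
    case False
    then obtain a0 where a0: "a0 \<in> A'" by blast
    have "\<forall>A\<in>A'. \<exists>C Ph. closedin ?T C \<and> continuous_map ?T (I_topology I V) Ph \<and> Ph ` C = A"
    proof
      fix A assume "A \<in> A'"
      hence "A \<in> \<A>" "A \<noteq> {}" unfolding A'_def by auto
      moreover have "I_analytic I V A" using assms(5) \<open>A \<in> \<A>\<close> by blast
      ultimately show "\<exists>C Ph. closedin ?T C \<and> continuous_map ?T (I_topology I V) Ph \<and> Ph ` C = A"
        unfolding I_analytic_def by blast
    qed
    from bchoice[OF this] obtain CC where
      "\<forall>A\<in>A'. \<exists>Ph. closedin ?T (CC A) \<and> continuous_map ?T (I_topology I V) Ph \<and> Ph ` (CC A) = A"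
      by blast
    from bchoice[OF this] obtain Ph where CP0:
      "\<forall>A\<in>A'. closedin ?T (CC A) \<and> continuous_map ?T (I_topology I V) (Ph A) \<and> Ph A ` (CC A) = A"
      by blast
    have CP: "closedin ?T (CC A)" "continuous_map ?T (I_topology I V) (Ph A)" "Ph A ` (CC A) = A"
      if "A \<in> A'" for A using CP0 that by auto
    have co: "Card_order r" "Field r = UNIV" "\<not> countable (UNIV :: 'k set)" "regularCard r"
      using assms(1) unfolding uncountable_regular_cardinal_def by auto
    have inf: "infinite (UNIV :: 'k set)" using co(3) countable_finite by blast
    have "\<exists>c d :: 'k. c \<noteq> d"
    proof (rule ccontr)
      assume "\<not> (\<exists>c d :: 'k. c \<noteq> d)"
      hence "UNIV = {undefined :: 'k}" by blast
      hence "finite (UNIV :: 'k set)" by (metis finite.emptyI finite.insertI)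
      thus False using inf by contradiction
    qed
    then obtain c d :: 'k where cd: "c \<noteq> d" by blast
    have "(card_of (UNIV :: ('k \<times> 'k) set), card_of (UNIV :: 'k set)) \<in> ordIso"
      using card_of_Times_same_infinite[OF inf] by simp
    hence "\<exists>p :: 'k \<times> 'k \<Rightarrow> 'k. bij_betw p UNIV UNIV" by (simp only: card_of_ordIso)
    then obtain p :: "'k \<times> 'k \<Rightarrow> 'k" where p: "bij_betw p UNIV UNIV" by blast
    define g where "g = inv p"
    have gp: "g (p q) = q" for q using p unfolding g_def by (simp add: bij_betw_def)
    obtain U where U: "U \<in> I" "\<not> bounded_in r U" using assms(3) by blast
    have wo: "wo_rel r" using co(1) unfolding wo_rel_def by (simp add: card_order_on_well_order_on)
    have "cofinal U r"
      unfolding cofinal_def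
    proof
      fix a assume "a \<in> Field r"
      obtain b where b: "b \<in> U" "(b, a) \<notin> r" using U(2) unfolding bounded_in_def by blast
      have "(a, a) \<in> r" using wo_rel.REFL[OF wo] co(2) by (simp add: refl_on_def)
      hence ab: "a \<noteq> b" using b by blast
      have "(a, b) \<in> r \<or> (b, a) \<in> r" using wo_rel.TOTALS[OF wo] co(2) by simp
      hence "(a, b) \<in> r" using b by blast
      thus "\<exists>b\<in>U. a \<noteq> b \<and> (a, b) \<in> r" using b ab by blast
    qed
    hence cU: "(card_of U, r) \<in> ordIso" using co(4) co(2) unfolding regularCard_def by simp
    have cK: "(card_of (UNIV :: 'k set), r) \<in> ordIso" using card_of_Field_ordIso[OF co(1)] co(2) by simp
    have "(card_of (UNIV :: 'k set), card_of U) \<in> ordIso"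
      by (rule ordIso_transitive[OF cK ordIso_symmetric[OF cU]])
    hence "\<exists>b :: 'k \<Rightarrow> 'k. bij_betw b UNIV U" by (simp only: card_of_ordIso)
    then obtain b :: "'k \<Rightarrow> 'k" where b: "bij_betw b UNIV U" by blast
    have bU: "b \<beta> \<in> U" for \<beta> using b by (auto simp: bij_betw_def)
    have binj: "inj b" using b by (simp add: bij_betw_def)
    have "(card_of A', card_of \<A>) \<in> ordLeq" unfolding A'_def by (rule card_of_mono1) blast
    hence "(card_of A', card_of (Pow (UNIV :: 'k set))) \<in> ordLeq" by (rule ordLeq_transitive[OF _ assms(6)])
    hence "\<exists>e. inj_on e A' \<and> e ` A' \<subseteq> Pow (UNIV :: 'k set)" by (simp only: card_of_ordLeq)
    then obtain e :: "('k \<Rightarrow> 'k) set \<Rightarrow> 'k set" where e: "inj_on e A'" by blast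
    define S where "S x = {\<beta>. fst (g (x (b \<beta>))) = c}" for x :: "'k \<Rightarrow> 'k"
    define h where "h = snd \<circ> g"
    define zz where "zz x = h \<circ> x" for x :: "'k \<Rightarrow> 'k"
    define \<iota> where "\<iota> x = (if S x \<in> e ` A' then inv_into A' e (S x) else a0)" for x
    have \<iota>A: "\<iota> x \<in> A'" for x unfolding \<iota>_def using a0 by (simp add: inv_into_into)
    define P where "P a = {x. \<iota> x = a}" for a
    have Popen: "openin ?T (P a)" for a
    proof (rule open_restr[OF emp U(1)])
      fix x y assume xy: "\<forall>d\<in>U. x d = y d" "x \<in> P a"
      have "S x = S y" unfolding S_def using xy(1) bU by simp
      hence "\<iota> x = \<iota> y" by (simp only: \<iota>_def)
      thus "y \<in> P a" using xy(2) unfolding P_def by simp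
    qed
    define \<Phi> where "\<Phi> x = Ph (\<iota> x) (zz x)" for x
    define C where "C = {x. zz x \<in> CC (\<iota> x)}"
    have cont: "continuous_map ?T (I_topology I V) \<Phi>"
      unfolding continuous_map_def
    proof (intro conjI allI impI Pi_I)
      fix x
      have "continuous_map ?T (I_topology I V) (Ph (\<iota> x))" using CP(2) \<iota>A by blast
      hence "Ph (\<iota> x) (zz x) \<in> topspace (I_topology I V)" using top
        by (simp add: continuous_map_def Pi_iff)
      thus "\<Phi> x \<in> topspace (I_topology I V)" unfolding \<Phi>_def .
    next
      fix W assume W: "openin (I_topology I V) W"
      have eq: "{x \<in> topspace ?T. \<Phi> x \<in> W} =
         \<Union>((\<lambda>a. P a \<inter> {x. h \<circ> x \<in> {y \<in> topspace ?T. Ph a y \<in> W}}) ` A')"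
      proof (rule set_eqI, rule iffI)
        fix x assume "x \<in> {x \<in> topspace ?T. \<Phi> x \<in> W}"
        hence "x \<in> P (\<iota> x) \<inter> {x. h \<circ> x \<in> {y \<in> topspace ?T. Ph (\<iota> x) y \<in> W}}"
          unfolding P_def \<Phi>_def zz_def top by simp
        thus "x \<in> \<Union>((\<lambda>a. P a \<inter> {x. h \<circ> x \<in> {y \<in> topspace ?T. Ph a y \<in> W}}) ` A')"
          using \<iota>A[of x] by blast
      next
        fix x assume "x \<in> \<Union>((\<lambda>a. P a \<inter> {x. h \<circ> x \<in> {y \<in> topspace ?T. Ph a y \<in> W}}) ` A')"
        then obtain a where "a \<in> A'" "x \<in> P a" "Ph a (h \<circ> x) \<in> W" by blast
        thus "x \<in> {x \<in> topspace ?T. \<Phi> x \<in> W}"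
          unfolding P_def \<Phi>_def zz_def top by simp
      qed
      show "openin ?T {x \<in> topspace ?T. \<Phi> x \<in> W}"
        unfolding eq
      proof (rule openin_Union, clarify)
        fix a assume a: "a \<in> A'"
        have "openin ?T {y \<in> topspace ?T. Ph a y \<in> W}"
          using openin_continuous_map_preimage[OF CP(2)[OF a] W] .
        thus "openin ?T (P a \<inter> {x. h \<circ> x \<in> {y \<in> topspace ?T. Ph a y \<in> W}})"
          using Popen comp_open[OF emp] by blast
      qed
    qed
    have closed: "closedin ?T C"
      unfolding closedin_def top
    proof
      have eq: "UNIV - C = \<Union>((\<lambda>a. P a \<inter> {x. h \<circ> x \<in> UNIV - CC a}) ` A')"
      proof (rule set_eqI, rule iffI)
        fix x assume "x \<in> UNIV - C"
        hence "x \<in> P (\<iota> x) \<inter> {x. h \<circ> x \<in> UNIV - CC (\<iota> x)}"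
          unfolding P_def C_def zz_def by simp
        thus "x \<in> \<Union>((\<lambda>a. P a \<inter> {x. h \<circ> x \<in> UNIV - CC a}) ` A')"
          using \<iota>A[of x] by blast
      next
        fix x assume "x \<in> \<Union>((\<lambda>a. P a \<inter> {x. h \<circ> x \<in> UNIV - CC a}) ` A')"
        then obtain a where "a \<in> A'" "x \<in> P a" "h \<circ> x \<notin> CC a" by blast
        thus "x \<in> UNIV - C" unfolding P_def C_def zz_def by simp
      qed
      show "openin ?T (UNIV - C)"
        unfolding eq
      proof (rule openin_Union, clarify)
        fix a assume a: "a \<in> A'"
        have "openin ?T (UNIV - CC a)"
          using CP(1)[OF a] top unfolding closedin_def by simp
        thus "openin ?T (P a \<inter> {x. h \<circ> x \<in> UNIV - CC a})"
          using Popen comp_open[OF emp] by blast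
      qed
    qed simp
    have img: "\<Phi> ` C = \<Union>\<A>"
    proof
      show "\<Phi> ` C \<subseteq> \<Union>\<A>"
      proof
        fix y assume "y \<in> \<Phi> ` C"
        then obtain x where x: "x \<in> C" "y = \<Phi> x" by blast
        hence "y \<in> Ph (\<iota> x) ` CC (\<iota> x)" unfolding \<Phi>_def C_def by simp
        hence "y \<in> \<iota> x" using CP(3)[OF \<iota>A[of x]] by simp
        thus "y \<in> \<Union>\<A>" using \<iota>A[of x] unfolding A'_def by blast
      qed
    next
      show "\<Union>\<A> \<subseteq> \<Phi> ` C"
      proof
        fix y assume "y \<in> \<Union>\<A>"
        then obtain A where A: "A \<in> \<A>" "y \<in> A" by blast
        hence A': "A \<in> A'" unfolding A'_def by blast
        have "y \<in> Ph A ` CC A" using CP(3)[OF A'] A(2) by simp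
        then obtain w where w: "w \<in> CC A" "y = Ph A w" by blast
        define x where "x \<alpha> = p (if \<alpha> \<in> b ` e A then c else d, w \<alpha>)" for \<alpha>
        have zx: "zz x = w" unfolding zz_def h_def x_def by (simp add: gp comp_def)
        have "S x = {\<beta>. b \<beta> \<in> b ` e A}" unfolding S_def x_def using cd by (simp add: gp)
        also have "\<dots> = e A" using binj by (auto simp: inj_image_mem_iff)
        finally have "S x = e A" .
        hence ix: "\<iota> x = A" unfolding \<iota>_def using A' e by simp
        have "x \<in> C" unfolding C_def using zx ix w by simp
        moreover have "\<Phi> x = y" unfolding \<Phi>_def using zx ix w by simp
        ultimately show "y \<in> \<Phi> ` C" by blast
      qed
    qed
    show ?thesis unfolding I_analytic_def using closed cont img by blast
  qed
qed

end
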